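(* Consider the explicit scheme on a uniform one-dimensional grid of spacing $h$, \[ \Phi^{1D,e}_{t+dt}(u):=u(\cdot,t)+dt\,F^{1D,e}[u(\cdot,t)], \] i.e. the forward Euler discretization of $u_t=F^{1D}[u]-f$ with $f=0$. If $dt\le(h^4/2)^{1/3}$, then the solution map satisfies the maximum principle \[ \min\Phi^{1D,e}_t(u)\le\Phi^{1D,e}_{t+dt}(u)\le\max\Phi^{1D,e}_t(u). \]
   Context: $F^{1D}[u]=(u_x^2u_{xx})^{1/3}$. With $A(p,q)=(p^2q)^{1/3}$ (real cube root), $A^+(p,q)=A(p^+,q^+)$, $A^-(p,q)=A(p^-,q^-)$, $x^+=\max(x,0)$, $x^-=\min(x,0)$, the (unregularized) scheme is $-F^{1D,e}[u]=A^+(\lvert u_x^h\rvert^+,-u_{xx}^h)+A^-(-\lvert u_x^h\rvert^-,-u_{xx}^h)$, with $\lvert u_x^h\rvert^+=\max\{\frac{u(x)-u(x+h)}h,\frac{u(x)-u(x-h)}h,0\}$, $-\lvert u_x^h\rvert^-=\min\{\frac{u(x)-u(x+h)}h,\frac{u(x)-u(x-h)}h,0\}$, $u_{xx}^h=\frac{u(x+h)-2u(x)+u(x-h)}{h^2}$. $\Phi^{1D,e}_t(u)$ denotes the grid function at time $t$; min and max are over grid points. *)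

theory Defs
  imports Complex_Main
begin

text \<open>Grid functions on the uniform 1D grid x_i = i*h, i in Z, are modelled as int => real.\<close>

definition posp :: "real \<Rightarrow> real" where "posp x = max x 0"
definition negp :: "real \<Rightarrow> real" where "negp x = min x 0"

text \<open>A(p,q) = (p^2 q)^(1/3), real cube root (root 3 is the odd real root).\<close>
definition A :: "real \<Rightarrow> real \<Rightarrow> real" where "A p q = root 3 (p^2 * q)"
definition Aplus :: "real \<Rightarrow> real \<Rightarrow> real" where "Aplus p q = A (posp p) (posp q)"
definition Aminus :: "real \<Rightarrow> real \<Rightarrow> real" where "Aminus p q = A (negp p) (negp q)"

definition abs_ux_plus :: "real \<Rightarrow> (int \<Rightarrow> real) \<Rightarrow> int \<Rightarrow> real" where
  "abs_ux_plus h u i = max (max ((u i - u (i+1)) / h) ((u i - u (i-1)) / h)) 0"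

definition neg_abs_ux_minus :: "real \<Rightarrow> (int \<Rightarrow> real) \<Rightarrow> int \<Rightarrow> real" where
  "neg_abs_ux_minus h u i = min (min ((u i - u (i+1)) / h) ((u i - u (i-1)) / h)) 0"

definition uxx :: "real \<Rightarrow> (int \<Rightarrow> real) \<Rightarrow> int \<Rightarrow> real" where
  "uxx h u i = (u (i+1) - 2 * u i + u (i-1)) / h^2"

definition F1De :: "real \<Rightarrow> (int \<Rightarrow> real) \<Rightarrow> int \<Rightarrow> real" where
  "F1De h u i = - (Aplus (abs_ux_plus h u i) (- uxx h u i) + Aminus (neg_abs_ux_minus h u i) (- uxx h u i))"

definition Phi_step :: "real \<Rightarrow> real \<Rightarrow> (int \<Rightarrow> real) \<Rightarrow> int \<Rightarrow> real" where
  "Phi_step h dt u i = u i + dt * F1De h u i"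

end

theory Submission
  imports Defs
begin

lemma dt_cube:
  assumes "dt > 0" "dt \<le> (c::real) powr (1/3)" "c > 0"
  shows "dt^3 \<le> c"
proof -
  have "dt^3 \<le> (c powr (1/3))^3" using assms by (intro power_mono) auto
  also have "\<dots> = c powr (1/3 * 3)" by (metis powr_powr powr_realpow assms(3) powr_gt_zero of_nat_numeral)
  finally show ?thesis using assms by simp
qed

lemma key:
  fixes dt h M q :: real
  assumes "dt > 0" "h > 0" "dt^3 \<le> h^4/2" "M \<ge> 0" "q \<ge> 0" "q*h \<le> 2*M"
  shows "dt * root 3 (M^2*q) \<le> h*M"
proof -
  have e1: "dt * root 3 (M^2*q) = root 3 (dt^3 * (M^2*q))"
    proof -
    have "root 3 (dt^3) = dt" using assms(1) by (simp add: real_root_power_cancel)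
    then show ?thesis by (simp add: real_root_mult)
  qed
  have "dt^3 * (M^2*q) \<le> h^4/2 * (M^2*q)"
    using assms by (intro mult_right_mono) auto
  also have "\<dots> = h^3/2 * M^2 * (q*h)" by (simp add: power_def algebra_simps)
  also have "\<dots> \<le> h^3/2 * M^2 * (2*M)" using assms by (intro mult_left_mono) auto
  also have "\<dots> = (h*M)^3" by (simp add: power_def algebra_simps)
  finally have "root 3 (dt^3 * (M^2*q)) \<le> root 3 ((h*M)^3)" by simp
  also have "\<dots> = h*M" using assms by (simp add: real_root_power_cancel)
  finally show ?thesis using e1 by simp
qed

theorem mainTheorem12:
  fixes h dt :: real and u :: "int \<Rightarrow> real"
  assumes "h > 0" and "dt > 0" and "dt \<le> (h^4 / 2) powr (1/3)"
    and "bdd_below (range u)" and "bdd_above (range u)"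
  shows "\<forall>i. Inf (range u) \<le> Phi_step h dt u i \<and> Phi_step h dt u i \<le> Sup (range u)"
proof
  fix i
  have dt3: "dt^3 \<le> h^4/2" using dt_cube[OF assms(2,3)] assms(1) by simp
  define a where "a = (u i - u (i+1)) / h"
  define b where "b = (u i - u (i-1)) / h"
  have q: "- uxx h u i = (a+b)/h" unfolding uxx_def a_def b_def using assms(1)
    by (simp add: field_simps power2_eq_square)
  have infl: "Inf (range u) \<le> u j" for j using assms(4) by (simp add: cInf_lower)
  have supl: "u j \<le> Sup (range u)" for j using assms(5) by (simp add: cSup_upper)
  have ua: "u (i+1) = u i - h*a" and ub: "u (i-1) = u i - h*b"
    unfolding a_def b_def using assms(1) by simp_all
  have P: "abs_ux_plus h u i = max (max a b) 0" unfolding abs_ux_plus_def a_def b_def by simp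
  have N: "neg_abs_ux_minus h u i = min (min a b) 0" unfolding neg_abs_ux_minus_def a_def b_def by simp
  show "Inf (range u) \<le> Phi_step h dt u i \<and> Phi_step h dt u i \<le> Sup (range u)"
  proof (cases "a + b \<ge> 0")
    case True
    define M where "M = max a b"
    have M0: "M \<ge> 0" using True unfolding M_def by auto
    have qq: "(a+b)/h \<ge> 0" using True assms(1) by simp
    have F: "F1De h u i = - root 3 (M^2 * ((a+b)/h))"
      unfolding F1De_def Aplus_def Aminus_def A_def P N q posp_def negp_def M_def
      using qq True by (auto simp: max_def min_def)
    have qh: "(a+b)/h * h \<le> 2*M" using assms(1) unfolding M_def by auto
    have K: "dt * root 3 (M^2 * ((a+b)/h)) \<le> h*M"
      using key[OF assms(2,1) dt3 M0 qq qh] .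
    have r0: "root 3 (M^2 * ((a+b)/h)) \<ge> 0" using qq by (simp del: times_divide_eq_right)
    have "u i - h*M \<ge> Inf (range u)"
      using infl[of "i+1"] infl[of "i-1"] ua ub unfolding M_def by (auto simp: max_def)
    moreover have "dt * root 3 (M^2 * ((a+b)/h)) \<ge> 0" using r0 assms(2) by (metis less_imp_le mult_nonneg_nonneg)
    ultimately show ?thesis unfolding Phi_step_def F using K supl[of i] by (simp only: mult_minus_right) linarith
  next
    case False
    define m where "m = min a b"
    have m0: "-m \<ge> 0" using False unfolding m_def by auto
    have qq: "-((a+b)/h) \<ge> 0" using False assms(1) by (simp add: divide_nonpos_pos)
    have F: "F1De h u i = root 3 ((-m)^2 * (-((a+b)/h)))"
      unfolding F1De_def Aplus_def Aminus_def A_def P N q posp_def negp_def m_def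
      using qq False by (auto simp: max_def min_def real_root_minus)
    have qh: "-((a+b)/h) * h \<le> 2*(-m)" using assms(1) unfolding m_def by auto
    have K: "dt * root 3 ((-m)^2 * (-((a+b)/h))) \<le> h*(-m)"
      using key[OF assms(2,1) dt3 m0 qq qh] .
    have r0: "root 3 ((-m)^2 * (-((a+b)/h))) \<ge> 0" proof -
      have "(-m)^2 * (-((a+b)/h)) \<ge> 0" using qq by (intro mult_nonneg_nonneg) auto
      then show ?thesis by (rule real_root_ge_zero)
    qed
    have "u i - h*m \<le> Sup (range u)"
      using supl[of "i+1"] supl[of "i-1"] ua ub unfolding m_def by (auto simp: min_def)
    moreover have "dt * root 3 ((-m)^2 * (-((a+b)/h))) \<ge> 0" using r0 assms(2) by (metis less_imp_le mult_nonneg_nonneg)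
    ultimately show ?thesis unfolding Phi_step_def F using K infl[of i] by (simp only: mult_minus_right) linarith
  qed
qed

end
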